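(* Let $a, b$ be positive integers with $b>1$ and let $i \ge 3$ be an integer with $\gcd(r_b(i),a)=1$. Then $\omega \in \operatorname{Ap}(S_a(b,i))$ if and only if either $\omega = b\, a^{(i)}_i$, or there exist $(u_2,\ldots,u_{i-1}) \in R(b,i-1)$ and $u_i \in \{0,\ldots,b-1\}$ such that \[\omega = \sum_{j=2}^{i-1} u_j a^{(i-1)}_j + b^{i-1}\Big(\sum_{j=2}^{i-1} u_j\Big) + u_i\, a^{(i)}_i.\]
   Context: For $\ell \ge 1$, $r_b(\ell) = \sum_{j=0}^{\ell-1} b^j$, and $r_b(0)=0$. For integers $m\ge 2$ and $j\ge 1$, $a^{(m)}_j := r_b(m) + a\, r_b(j-1)$, and $S_a(b,m)$ is the submonoid of $\mathbb{N}$ generated by $\{a^{(m)}_j : j\ge 1\}$. $\operatorname{Ap}(S) = \{\omega\in S : \omega - \operatorname{m}(S) \notin S\}$ where $\operatorname{m}(S)$ is the smallest nonzero element of $S$. For $m\ge 2$, $R(b,m)$ is the set of $(u_2,\ldots,u_m) \in \mathbb{N}^{m-1}$ with $0 \le u_j \le b$ for all $j$, and such that $u_j = b$ implies $u_k = 0$ for all $2\le k<j$. *)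

theory Defs
  imports Main
begin

definition rb :: "nat \<Rightarrow> nat \<Rightarrow> nat" where
  "rb b l = (\<Sum>j<l. b ^ j)"

definition agen :: "nat \<Rightarrow> nat \<Rightarrow> nat \<Rightarrow> nat \<Rightarrow> nat" where
  "agen a b m j = rb b m + a * rb b (j - 1)"

inductive_set monoid_gen :: "nat set \<Rightarrow> nat set" for G :: "nat set" where
  zero: "0 \<in> monoid_gen G"
| add: "g \<in> G \<Longrightarrow> s \<in> monoid_gen G \<Longrightarrow> g + s \<in> monoid_gen G"

definition Sab :: "nat \<Rightarrow> nat \<Rightarrow> nat \<Rightarrow> nat set" where
  "Sab a b m = monoid_gen {agen a b m j | j. j \<ge> 1}"

definition multiplicity_nm :: "nat set \<Rightarrow> nat" where
  "multiplicity_nm S = (LEAST x. x \<in> S \<and> x \<noteq> 0)"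

text \<open>Apery set with respect to the multiplicity (subtraction read in the integers).\<close>
definition Apery :: "nat set \<Rightarrow> nat set" where
  "Apery S = {w \<in> S. \<not> (w \<ge> multiplicity_nm S \<and> w - multiplicity_nm S \<in> S)}"

text \<open>R(b,m): tuples (u_2,...,u_m), encoded as functions nat \<Rightarrow> nat vanishing outside {2..m}.\<close>
definition Rset :: "nat \<Rightarrow> nat \<Rightarrow> (nat \<Rightarrow> nat) set" where
  "Rset b m = {u. (\<forall>j. j \<notin> {2..m} \<longrightarrow> u j = 0) \<and> (\<forall>j\<in>{2..m}. u j \<le> b)
                 \<and> (\<forall>j\<in>{2..m}. u j = b \<longrightarrow> (\<forall>k. 2 \<le> k \<and> k < j \<longrightarrow> u k = 0))}"

end

theory Submission
  imports Defs "HOL-Library.Multiset" "HOL-Number_Theory.Cong"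
begin


lemma mg_add: "x \<in> monoid_gen G \<Longrightarrow> y \<in> monoid_gen G \<Longrightarrow> x + y \<in> monoid_gen G"
  by (induction x rule: monoid_gen.induct) (auto simp: add.assoc intro: monoid_gen.add)

lemma mg_gen: "g \<in> G \<Longrightarrow> g \<in> monoid_gen G"
  using monoid_gen.add[OF _ monoid_gen.zero] by simp

lemma mg_mult: "x \<in> monoid_gen G \<Longrightarrow> k * x \<in> monoid_gen G"
  by (induction k) (auto intro: mg_add monoid_gen.zero)

lemma agen_in: "j \<ge> 1 \<Longrightarrow> agen a b m j \<in> Sab a b m"
  unfolding Sab_def by (rule mg_gen) blast

lemma S_add: "x \<in> Sab a b m \<Longrightarrow> y \<in> Sab a b m \<Longrightarrow> x + y \<in> Sab a b m"
  unfolding Sab_def by (rule mg_add)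

lemma S_mult: "x \<in> Sab a b m \<Longrightarrow> k * x \<in> Sab a b m"
  unfolding Sab_def by (rule mg_mult)

lemma S_zero: "0 \<in> Sab a b m"
  unfolding Sab_def by (rule monoid_gen.zero)

lemma msum_in: "set_mset M \<subseteq> {1..} \<Longrightarrow> (\<Sum>x\<in>#M. agen a b m x) \<in> Sab a b m"
  by (induction M) (auto intro!: S_add agen_in S_zero)

lemma rep: "w \<in> Sab a b m \<Longrightarrow> \<exists>M. set_mset M \<subseteq> {1..} \<and> w = (\<Sum>x\<in>#M. agen a b m x)"
  unfolding Sab_def
proof (induction w rule: monoid_gen.induct)
  case zero
  then show ?case by (intro exI[of _ "{#}"]) auto
next
  case (add g s)
  then obtain M where "set_mset M \<subseteq> {1..}" "s = (\<Sum>x\<in>#M. agen a b m x)" by blast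
  moreover obtain j where "j \<ge> 1" "g = agen a b m j" using add by blast
  ultimately show ?case by (intro exI[of _ "add_mset j M"]) auto
qed

lemma S_pos: "w \<in> Sab a b m \<Longrightarrow> w = 0 \<or> w \<ge> rb b m"
  unfolding Sab_def
  by (induction w rule: monoid_gen.induct) (auto simp: agen_def)

lemma rb_Suc2: "rb b (Suc n) = rb b n + b ^ n"
  unfolding rb_def by simp

lemma rb_Suc: "rb b (Suc n) = b * rb b n + 1"
proof (induction n)
  case 0
  then show ?case by (simp add: rb_def)
next
  case (Suc n)
  have "rb b (Suc (Suc n)) = rb b (Suc n) + b * b^n" by (simp add: rb_Suc2)
  also have "\<dots> = b * (rb b n + b^n) + 1" using Suc by (simp add: algebra_simps)
  also have "\<dots> = b * rb b (Suc n) + 1" by (simp add: rb_Suc2)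
  finally show ?case .
qed

lemma rb_add: "rb b (n + k) = rb b k + b ^ k * rb b n"
  by (induction n) (auto simp: rb_Suc2 rb_def power_add algebra_simps)

lemma rb_pos: "n \<ge> 1 \<Longrightarrow> rb b n \<ge> 1"
  by (cases n) (auto simp: rb_Suc)

lemma agen1: "agen a b m 1 = rb b m"
  by (simp add: agen_def rb_def)

lemma agen_shift: "agen a b m (m + 1 + k) = agen a b m (k + 1) + a * b ^ k * rb b m"
  unfolding agen_def using rb_add[of b m k] by (simp add: algebra_simps)

lemma agen_rel:
  assumes "2 \<le> k" "1 \<le> j"
  shows "b * agen a b m j + agen a b m k = agen a b m (j + 1) + b * agen a b m (k - 1)"
proof -
  have 1: "rb b j = b * rb b (j - 1) + 1" using rb_Suc[of b "j-1"] assms by simp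
  have e: "k - 1 = Suc (k - 2)" using assms by arith
  have 2: "rb b (k - 1) = b * rb b (k - 2) + 1" unfolding e by (rule rb_Suc)
  show ?thesis unfolding agen_def using 1 2 assms by (simp add: algebra_simps numeral_2_eq_2)
qed

lemma mult_S:
  assumes "m \<ge> 1"
  shows "multiplicity_nm (Sab a b m) = rb b m"
  unfolding multiplicity_nm_def
proof (rule Least_equality)
  show "rb b m \<in> Sab a b m \<and> rb b m \<noteq> 0"
    using agen_in[of 1 a b m] agen1[of a b m] rb_pos[OF assms, of b] by auto
  show "\<And>y. y \<in> Sab a b m \<and> y \<noteq> 0 \<Longrightarrow> rb b m \<le> y" using S_pos by blast
qed

lemma msum_count:
  assumes "set_mset M \<subseteq> A" "finite A"
  shows "(\<Sum>x\<in>#M. f x) = (\<Sum>j\<in>A. count M j * f j)"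
  using assms(1)
proof (induction M)
  case empty
  then show ?case by simp
next
  case (add x M)
  then have "x \<in> A" by simp
  have "(\<Sum>j\<in>A. count (add_mset x M) j * f j) = (\<Sum>j\<in>A. count M j * f j + (if j = x then f x else 0))"
    by (intro sum.cong) auto
  also have "\<dots> = (\<Sum>j\<in>A. count M j * f j) + f x"
    using \<open>x \<in> A\<close> assms(2) by (simp add: sum.distrib)
  finally show ?case using add by simp
qed

lemma msum_remove: "x \<in># M \<Longrightarrow> (\<Sum>y\<in>#M. f y) = f x + (\<Sum>y\<in>#M - {#x#}. f y)"
  by (metis insert_DiffM sum_mset.insert image_mset_add_mset)



lemma ineq:
  fixes j k b :: nat
  assumes "3 \<le> k" "k \<le> j" "2 \<le> b"
  shows "(j+1)^2 + b*(k-1)^2 < b*j^2 + k^2"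
proof -
  have x: "(k-1)^2 \<le> j^2" using assms by (intro power_mono) auto
  have "(b-2)*(k-1)^2 \<le> (b-2)*j^2" using x by simp
  then have 1: "b*(k-1)^2 + 2*j^2 \<le> b*j^2 + 2*(k-1)^2"
  proof -
    have h1: "2*(k-1)^2 \<le> b*(k-1)^2" "2*j^2 \<le> b*j^2" using assms by simp_all
    have h2: "b*(k-1)^2 - 2*(k-1)^2 \<le> b*j^2 - 2*j^2"
      using \<open>(b-2)*(k-1)^2 \<le> (b-2)*j^2\<close> by (simp add: diff_mult_distrib)
    show ?thesis using h1 h2 by linarith
  qed
  have "int k * (int k - 2) \<le> int j * (int j - 2)" using assms by (intro mult_mono) auto
  then have 2: "(int j+1)^2 + 2*(int k-1)^2 < 2*(int j)^2 + (int k)^2" using assms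
    by (simp add: power2_eq_square algebra_simps)
  have e: "int (k-1) = int k - 1" using assms by simp
  have "int ((j+1)^2 + 2*(k-1)^2) < int (2*j^2 + k^2)" unfolding of_nat_add of_nat_mult of_nat_power e
    using 2 by simp
  then have "(j+1)^2 + 2*(k-1)^2 < 2*j^2 + k^2" by (simp only: of_nat_less_iff)
  then show ?thesis using 1 by linarith
qed



lemma r_in: "rb b m \<in> Sab a b m"
  using agen_in[of 1 a b m] agen1[of a b m] by simp

lemma support:
  assumes "a > 0" "b > 0" "m \<ge> 1"
    and noap: "\<forall>s\<in>Sab a b m. w \<noteq> rb b m + s"
    and M: "set_mset M \<subseteq> {1..}" "w = (\<Sum>x\<in>#M. agen a b m x)"
  shows "set_mset M \<subseteq> {2..m}"
proof
  fix x assume x: "x \<in> set_mset M"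
  have sub: "set_mset (M - {#x#}) \<subseteq> {1..}" using M(1) by (meson in_diffD subset_iff)
  have rest: "(\<Sum>y\<in>#M - {#x#}. agen a b m y) \<in> Sab a b m" by (rule msum_in[OF sub])
  have wx: "w = agen a b m x + (\<Sum>y\<in>#M - {#x#}. agen a b m y)"
    using M(2) msum_remove[of x M] x by simp
  have "x \<noteq> 1"
  proof
    assume "x = 1"
    then have "w = rb b m + (\<Sum>y\<in>#M - {#x#}. agen a b m y)" using wx agen1 by simp
    then show False using noap rest by blast
  qed
  moreover have "\<not> x > m"
  proof
    assume "x > m"
    define k where "k = x - m - 1"
    have xk: "x = m + 1 + k" using \<open>x > m\<close> k_def by simp
    have ab: "a * b ^ k \<ge> 1" using assms by simp
    have "agen a b m x = agen a b m (k+1) + a * b ^ k * rb b m" using agen_shift xk by simp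
    also have "\<dots> = rb b m + (agen a b m (k+1) + (a * b ^ k - 1) * rb b m)"
    proof -
      obtain t where t: "a * b ^ k = Suc t" using ab by (cases "a * b ^ k") auto
      show ?thesis by (simp add: t)
    qed
    finally have "w = rb b m + (agen a b m (k+1) + (a * b ^ k - 1) * rb b m
        + (\<Sum>y\<in>#M - {#x#}. agen a b m y))" using wx by simp
    moreover have "agen a b m (k+1) + (a * b ^ k - 1) * rb b m
        + (\<Sum>y\<in>#M - {#x#}. agen a b m y) \<in> Sab a b m"
      by (intro S_add S_mult rest agen_in r_in) (auto intro: agen_in r_in)
    ultimately show False using noap by blast
  qed
  ultimately show "x \<in> {2..m}" using M(1) x by force
qed

definition Rform :: "nat \<Rightarrow> nat \<Rightarrow> nat multiset \<Rightarrow> bool" where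
  "Rform b m M \<longleftrightarrow> (\<forall>j\<in>{2..m}. count M j \<le> b \<and> (count M j = b \<longrightarrow> (\<forall>k. 2 \<le> k \<and> k < j \<longrightarrow> count M k = 0)))"

lemma reduce:
  assumes "m \<ge> 2" "b \<ge> 2"
    and noap: "\<forall>s\<in>Sab a b m. w \<noteq> rb b m + s"
  shows "set_mset M \<subseteq> {2..m} \<Longrightarrow> w = (\<Sum>x\<in>#M. agen a b m x) \<Longrightarrow>
     \<exists>M'. set_mset M' \<subseteq> {2..m} \<and> w = (\<Sum>x\<in>#M'. agen a b m x) \<and> Rform b m M'"
proof (induction "\<Sum>x\<in>#M. x^2" arbitrary: M rule: less_induct)
  case less
  show ?case
  proof (cases "Rform b m M")
    case True
    then show ?thesis using less.prems by blast
  next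
    case False
    then obtain j k where jk: "j \<in> {2..m}" "2 \<le> k" "k \<le> j"
      and Nsub: "replicate_mset b j + {#k#} \<subseteq># M"
    proof -
      from False obtain j where j: "j \<in> {2..m}"
        and c: "count M j > b \<or> (count M j = b \<and> (\<exists>k. 2 \<le> k \<and> k < j \<and> count M k \<noteq> 0))"
        unfolding Rform_def by force
      show ?thesis
      proof (cases "count M j > b")
        case True
        have "replicate_mset b j + {#j#} \<subseteq># M"
          unfolding subseteq_mset_def using True by auto
        then show ?thesis using that[of j j] j by auto
      next
        case False
        then obtain k where k: "2 \<le> k" "k < j" "count M k \<noteq> 0" "count M j = b" using c by auto
        have "replicate_mset b j + {#k#} \<subseteq># M"
          unfolding subseteq_mset_def using k by auto
        then show ?thesis using that[of j k] j k by auto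
      qed
    qed
    define R where "R = M - (replicate_mset b j + {#k#})"
    have MR: "M = R + (replicate_mset b j + {#k#})" unfolding R_def
      by (rule subset_mset.diff_add[OF Nsub, symmetric])
    have Rsub: "set_mset R \<subseteq> {2..m}" using less.prems(1) unfolding R_def
      by (meson in_diffD subset_iff)
    have Rin: "(\<Sum>x\<in>#R. agen a b m x) \<in> Sab a b m"
      by (rule msum_in) (use Rsub in auto)
    have "w = (\<Sum>x\<in>#R. agen a b m x) + (b * agen a b m j + agen a b m k)"
      using less.prems(2) MR by simp
    also have "b * agen a b m j + agen a b m k = agen a b m (j + 1) + b * agen a b m (k - 1)"
      using agen_rel jk by simp
    finally have w: "w = (\<Sum>x\<in>#R. agen a b m x) + agen a b m (j + 1) + b * agen a b m (k - 1)"
      by simp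
    show ?thesis
    proof (cases "k = 2")
      case True
      then have "w = rb b m + ((\<Sum>x\<in>#R. agen a b m x) + agen a b m (j + 1) + (b - 1) * rb b m)"
      proof -
        obtain t where t: "b = Suc t" using assms(2) by (cases b) auto
        show ?thesis using w agen1 True by (simp add: t)
      qed
      moreover have "(\<Sum>x\<in>#R. agen a b m x) + agen a b m (j + 1) + (b - 1) * rb b m \<in> Sab a b m"
        by (intro S_add S_mult Rin agen_in r_in) (auto intro: agen_in r_in)
      ultimately show ?thesis using noap by blast
    next
      case k3: False
      show ?thesis
      proof (cases "j = m")
        case True
        have "agen a b m (j+1) = rb b m + a * rb b m" using agen_shift[of a b m 0] agen1 True by simp
        then have "w = rb b m + ((\<Sum>x\<in>#R. agen a b m x) + a * rb b m + b * agen a b m (k - 1))"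
          using w by simp
        moreover have "(\<Sum>x\<in>#R. agen a b m x) + a * rb b m + b * agen a b m (k - 1) \<in> Sab a b m"
          using jk by (intro S_add S_mult Rin agen_in r_in) (auto intro: agen_in r_in)
        ultimately show ?thesis using noap by blast
      next
        case False
        define M' where "M' = R + {#j+1#} + replicate_mset b (k - 1)"
        have M'sub: "set_mset M' \<subseteq> {2..m}" unfolding M'_def using Rsub jk k3 False by auto
        have wM': "w = (\<Sum>x\<in>#M'. agen a b m x)" unfolding M'_def using w by simp
        have "(j+1)^2 + b*(k-1)^2 < b*j^2 + k^2" using jk k3 assms by (intro ineq) auto
        then have "(\<Sum>x\<in>#M'. x^2) < (\<Sum>x\<in>#M. x^2)" unfolding M'_def MR by simp
        then show ?thesis using less.hyps M'sub wM' by blast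
      qed
    qed
  qed
qed



lemma Rset_card: "n \<ge> 1 \<Longrightarrow> finite (Rset b n) \<and> card (Rset b n) \<le> rb b n"
proof (induction n rule: nat_induct_at_least)
  case base
  have "Rset b 1 \<subseteq> {\<lambda>_. 0}" unfolding Rset_def by auto
  moreover have "rb b 1 = 1" by (simp add: rb_def)
  ultimately show ?case using card_mono[of "{\<lambda>_. 0}" "Rset b 1"] finite_subset by fastforce
next
  case (Suc n)
  let ?F = "(\<lambda>(u,t). u(Suc n := t)) ` (Rset b n \<times> {..<b})"
  have sub: "Rset b (Suc n) \<subseteq> insert (\<lambda>x. if x = Suc n then b else 0) ?F"
  proof
    fix u assume u: "u \<in> Rset b (Suc n)"
    have h1: "\<And>j. j \<notin> {2..Suc n} \<Longrightarrow> u j = 0"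
      and h2: "\<And>j. j \<in> {2..Suc n} \<Longrightarrow> u j \<le> b"
      and h3: "\<And>j k. j \<in> {2..Suc n} \<Longrightarrow> u j = b \<Longrightarrow> 2 \<le> k \<Longrightarrow> k < j \<Longrightarrow> u k = 0"
      using u unfolding Rset_def by blast+
    have sn: "Suc n \<in> {2..Suc n}" using Suc.hyps by simp
    show "u \<in> insert (\<lambda>x. if x = Suc n then b else 0) ?F"
    proof (cases "u (Suc n) = b")
      case True
      have "u = (\<lambda>x. if x = Suc n then b else 0)"
      proof
        fix x
        show "u x = (if x = Suc n then b else 0)"
        proof (cases "x = Suc n")
          case True
          then show ?thesis using \<open>u (Suc n) = b\<close> by simp
        next
          case False
          show ?thesis
          proof (cases "x \<in> {2..Suc n}")
            case True
            then have "2 \<le> x" "x < Suc n" using \<open>x \<noteq> Suc n\<close> by auto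
            then show ?thesis using h3[OF sn \<open>u (Suc n) = b\<close>] False by simp
          next
            case False
            then show ?thesis using h1 \<open>x \<noteq> Suc n\<close> by simp
          qed
        qed
      qed
      then show ?thesis by simp
    next
      case False
      then have lt: "u (Suc n) < b" using h2[OF sn] by simp
      have "u(Suc n := 0) \<in> Rset b n"
        unfolding Rset_def
      proof (intro CollectI conjI allI ballI impI)
        fix j assume "j \<notin> {2..n}"
        then show "(u(Suc n := 0)) j = 0"
        proof (cases "j = Suc n")
          case False
          then have "j \<notin> {2..Suc n}" using \<open>j \<notin> {2..n}\<close> by auto
          then show ?thesis using h1 False by simp
        qed simp
      next
        fix j assume j: "j \<in> {2..n}"
        then have "j \<in> {2..Suc n}" "j \<noteq> Suc n" by auto
        then show "(u(Suc n := 0)) j \<le> b" using h2 by simp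
      next
        fix j k assume j: "j \<in> {2..n}" and e: "(u(Suc n := 0)) j = b" and k: "2 \<le> k \<and> k < j"
        then have "j \<in> {2..Suc n}" "j \<noteq> Suc n" "k \<noteq> Suc n" by auto
        then show "(u(Suc n := 0)) k = 0" using h3[of j k] e k by simp
      qed
      moreover have "u = (u(Suc n := 0))(Suc n := u (Suc n))" by simp
      ultimately have "u \<in> ?F" using lt
        by (intro image_eqI[where x="(u(Suc n := 0), u (Suc n))"]) auto
      then show ?thesis by simp
    qed
  qed
  have fin: "finite ?F" using Suc.IH by simp
  have "card ?F \<le> card (Rset b n \<times> {..<b})" by (rule card_image_le) (use Suc.IH in simp)
  also have "\<dots> = card (Rset b n) * b" by (simp add: card_cartesian_product)
  finally have cF: "card ?F \<le> rb b n * b" using Suc.IH by (meson le_trans mult_le_mono1)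
  have "card (Rset b (Suc n)) \<le> card (insert (\<lambda>x. if x = Suc n then b else 0) ?F)"
    by (rule card_mono) (use fin sub in auto)
  also have "\<dots> \<le> Suc (card ?F)" by (rule card_insert_le_m1) auto
  also have "\<dots> \<le> rb b (Suc n)" using cF by (simp add: rb_Suc mult.commute)
  finally show ?case using sub fin finite_subset by blast
qed

lemma residues:
  assumes "coprime a (rb b m)" "c < rb b m"
  shows "\<exists>x\<in>Sab a b m. x mod rb b m = c"
proof -
  obtain y where y: "[a * y = Suc 0] (mod rb b m)" using cong_solve_coprime_nat[OF assms(1)] by blast
  have g2: "agen a b m 2 = rb b m + a" by (simp add: agen_def rb_def)
  have "(y * c) * agen a b m 2 \<in> Sab a b m" by (intro S_mult agen_in) auto
  moreover have "((y * c) * agen a b m 2) mod rb b m = c"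
  proof -
    have e: "(y * c) * agen a b m 2 = (a*y)*c + (y*c) * rb b m" unfolding g2 by (simp add: algebra_simps)
    have "[(y * c) * agen a b m 2 = (a * y) * c] (mod rb b m)"
      unfolding cong_def e by simp
    also have "[(a * y) * c = Suc 0 * c] (mod rb b m)" by (rule cong_scalar_right[OF y])
    finally show ?thesis using assms(2) unfolding cong_def by simp
  qed
  ultimately show ?thesis by blast
qed

lemma apery_card:
  assumes "coprime a (rb b m)" "m \<ge> 1" "finite (Apery (Sab a b m))"
  shows "rb b m \<le> card (Apery (Sab a b m))"
proof -
  let ?r = "rb b m" and ?S = "Sab a b m"
  define f where "f c = (LEAST x. x \<in> ?S \<and> x mod ?r = c)" for c
  have rpos: "?r > 0" using rb_pos[OF assms(2), of b] by simp
  have fP: "f c \<in> ?S \<and> f c mod ?r = c" if "c < ?r" for c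
    unfolding f_def using residues[OF assms(1) that] by (metis (mono_tags, lifting) LeastI)
  have fA: "f c \<in> Apery ?S" if "c < ?r" for c
  proof -
    have "\<not> (f c \<ge> ?r \<and> f c - ?r \<in> ?S)"
    proof
      assume h: "f c \<ge> ?r \<and> f c - ?r \<in> ?S"
      then have "(f c - ?r) mod ?r = c" using fP[OF that] by (metis le_mod_geq)
      then have "f c \<le> f c - ?r" unfolding f_def[of c] using h f_def by (metis (mono_tags, lifting) Least_le)
      then show False using rpos h fP[OF that] by linarith
    qed
    then show ?thesis unfolding Apery_def mult_S[OF assms(2)] using fP[OF that] by simp
  qed
  have "inj_on f {..<?r}" by (intro inj_onI) (metis fP lessThan_iff)
  then have "card (f ` {..<?r}) = ?r" by (simp add: card_image)
  moreover have "f ` {..<?r} \<subseteq> Apery ?S" using fA by auto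
  ultimately show ?thesis using card_mono[OF assms(3)] by metis
qed



lemma conv:
  assumes i: "i \<ge> 3" and Ms: "set_mset M \<subseteq> {2..i}" and R: "Rform b i M"
    and w: "w = (\<Sum>x\<in>#M. agen a b i x)"
  shows "w = b * agen a b i i \<or>
            (\<exists>u \<in> Rset b (i - 1). \<exists>ui < b.
               w = (\<Sum>j=2..i-1. u j * agen a b (i - 1) j) + b ^ (i - 1) * (\<Sum>j=2..i-1. u j)
                   + ui * agen a b i i)"
proof -
  have hR1: "\<And>j. j \<in> {2..i} \<Longrightarrow> count M j \<le> b"
    and hR2: "\<And>j k. j \<in> {2..i} \<Longrightarrow> count M j = b \<Longrightarrow> 2 \<le> k \<Longrightarrow> k < j \<Longrightarrow> count M k = 0"
    using R unfolding Rform_def by blast+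
  have ins: "{2..i} = insert i {2..i-1}" using i by auto
  have w2: "w = count M i * agen a b i i + (\<Sum>j\<in>{2..i-1}. count M j * agen a b i j)"
  proof -
    have "i \<notin> {2..i-1}" using i by auto
    then show ?thesis using w msum_count[OF Ms, of "agen a b i"] unfolding ins by simp
  qed
  show ?thesis
  proof (cases "count M i = b")
    case True
    have iin: "i \<in> {2..i}" using i by simp
    have "(\<Sum>j\<in>{2..i-1}. count M j * agen a b i j) = 0"
    proof (intro sum.neutral ballI)
      fix j assume "j \<in> {2..i-1}"
      then have "2 \<le> j" "j < i" using i by auto
      then show "count M j * agen a b i j = 0" using hR2[OF iin True] by simp
    qed
    then show ?thesis using w2 True by simp
  next
    case False
    have "count M i \<le> b" using hR1 i by simp
    then have lt: "count M i < b" using False by simp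
    define u where "u x = (if x \<in> {2..i-1} then count M x else 0)" for x
    have uR: "u \<in> Rset b (i - 1)"
      unfolding Rset_def
    proof (intro CollectI conjI allI ballI impI)
      fix j assume "j \<notin> {2..i-1}" then show "u j = 0" by (auto simp: u_def)
    next
      fix j assume j: "j \<in> {2..i-1}"
      then have "j \<in> {2..i}" by auto
      then show "u j \<le> b" using hR1 j by (simp add: u_def)
    next
      fix j k assume j: "j \<in> {2..i-1}" and e: "u j = b" and k: "2 \<le> k \<and> k < j"
      then have "j \<in> {2..i}" "count M j = b" "k \<in> {2..i-1}" by (auto simp: u_def)
      then show "u k = 0" using hR2[of j k] k by (simp add: u_def)
    qed
    have ag: "agen a b i j = agen a b (i-1) j + b ^ (i - 1)" for j
    proof -
      have "i = Suc (i - 1)" using i by simp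
      then have "rb b i = rb b (i-1) + b^(i-1)" by (metis rb_Suc2)
      then show ?thesis by (simp add: agen_def)
    qed
    have "(\<Sum>j\<in>{2..i-1}. count M j * agen a b i j) = (\<Sum>j\<in>{2..i-1}. u j * agen a b (i-1) j + b^(i-1) * u j)"
      by (intro sum.cong refl) (simp add: u_def ag algebra_simps)
    also have "\<dots> = (\<Sum>j=2..i-1. u j * agen a b (i - 1) j) + b ^ (i - 1) * (\<Sum>j=2..i-1. u j)"
      by (simp add: sum.distrib sum_distrib_left)
    finally have "w = (\<Sum>j=2..i-1. u j * agen a b (i - 1) j) + b ^ (i - 1) * (\<Sum>j=2..i-1. u j)
                   + count M i * agen a b i i" using w2 by simp
    then show ?thesis using uR lt by blast
  qed
qed

theorem corollary18:
  fixes a b i :: nat and \<omega> :: nat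
  assumes "a > 0" and "b > 1" and "i \<ge> 3" and "gcd (rb b i) a = 1"
  shows "\<omega> \<in> Apery (Sab a b i) \<longleftrightarrow>
           (\<omega> = b * agen a b i i \<or>
            (\<exists>u \<in> Rset b (i - 1). \<exists>ui < b.
               \<omega> = (\<Sum>j=2..i-1. u j * agen a b (i - 1) j) + b ^ (i - 1) * (\<Sum>j=2..i-1. u j)
                   + ui * agen a b i i))"
proof -
  define E where "E = (\<lambda>(u::nat\<Rightarrow>nat, ui::nat). (\<Sum>j=2..i-1. u j * agen a b (i - 1) j) + b ^ (i - 1) * (\<Sum>j=2..i-1. u j)
                   + ui * agen a b i i)"
  define T where "T = insert (b * agen a b i i) (E ` (Rset b (i - 1) \<times> {..<b}))"
  have PT: "(w = b * agen a b i i \<or>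
            (\<exists>u \<in> Rset b (i - 1). \<exists>ui < b.
               w = (\<Sum>j=2..i-1. u j * agen a b (i - 1) j) + b ^ (i - 1) * (\<Sum>j=2..i-1. u j)
                   + ui * agen a b i i)) \<longleftrightarrow> w \<in> T" for w
  proof -
    have "w \<in> T \<longleftrightarrow> w = b * agen a b i i \<or> (\<exists>p\<in>Rset b (i-1) \<times> {..<b}. w = E p)"
      unfolding T_def by blast
    also have "(\<exists>p\<in>Rset b (i-1) \<times> {..<b}. w = E p) \<longleftrightarrow> (\<exists>u\<in>Rset b (i-1). \<exists>ui<b. w = E (u,ui))"
      by auto
    finally show ?thesis by (simp add: E_def)
  qed
  have cop: "coprime a (rb b i)" using assms(4) by (simp add: coprime_iff_gcd_eq_1 gcd.commute)
  have i1: "i \<ge> 1" "i \<ge> 2" using assms(3) by auto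
  have ApT: "Apery (Sab a b i) \<subseteq> T"
  proof
    fix w assume wA: "w \<in> Apery (Sab a b i)"
    then have wS: "w \<in> Sab a b i" unfolding Apery_def by simp
    have noap: "\<forall>s\<in>Sab a b i. w \<noteq> rb b i + s"
      using wA unfolding Apery_def mult_S[OF i1(1)] by auto
    obtain M where M: "set_mset M \<subseteq> {1..}" "w = (\<Sum>x\<in>#M. agen a b i x)" using rep[OF wS] by blast
    have Ms: "set_mset M \<subseteq> {2..i}" using support[OF assms(1) _ i1(1) noap M] assms(2) by simp
    obtain M' where M': "set_mset M' \<subseteq> {2..i}" "w = (\<Sum>x\<in>#M'. agen a b i x)" "Rform b i M'"
      using reduce[OF i1(2) _ noap Ms M(2)] assms(2) by auto
    show "w \<in> T" using conv[OF assms(3) M'(1) M'(3) M'(2)] PT by blast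
  qed
  obtain finR: "finite (Rset b (i-1))" and cR: "card (Rset b (i-1)) \<le> rb b (i-1)"
    using Rset_card[of "i-1" b] assms(3) by auto
  have finT: "finite T" unfolding T_def using finR by simp
  have "card T \<le> Suc (card (E ` (Rset b (i - 1) \<times> {..<b})))"
    unfolding T_def by (rule card_insert_le_m1) auto
  also have "card (E ` (Rset b (i - 1) \<times> {..<b})) \<le> card (Rset b (i - 1) \<times> {..<b})"
    by (rule card_image_le) (use finR in simp)
  also have "\<dots> = card (Rset b (i-1)) * b" by (simp add: card_cartesian_product)
  also have "\<dots> \<le> rb b (i-1) * b" using cR by simp
  finally have "card T \<le> rb b (i-1) * b + 1" by simp
  also have "\<dots> = rb b i"
  proof -
    have "i = Suc (i - 1)" using assms(3) by simp
    then show ?thesis by (metis rb_Suc mult.commute)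
  qed
  finally have cT: "card T \<le> rb b i" .
  have finA: "finite (Apery (Sab a b i))" using finite_subset[OF ApT finT] .
  have "rb b i \<le> card (Apery (Sab a b i))" by (rule apery_card[OF cop i1(1) finA])
  then have "Apery (Sab a b i) = T" using card_seteq[OF finT ApT] cT by simp
  then show ?thesis using PT by simp
qed

end
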